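(* Let $\mathcal H_A$ be a finite-dimensional Hilbert space, $N\ge1$, and $\mathcal F(A)\subseteq\mathcal D(\mathcal H_A)$ a set of free states which is affine, with $N$-partite free states $\mathcal F(A_1\dots A_N)=\mathrm{Aff}\big(\mathcal F(A)\otimes\dots\otimes\mathcal F(A)\big)$ ($N$ factors). Suppose $\Delta$ is a resource-destroying map for $\mathcal F(A)$. Then the censorship implemented by $\Delta^{\otimes N}$ is unbreakable: there is no $\rho\in\mathcal D(\mathcal H_A^{\otimes N})$ with $\rho\notin\mathcal F(A_1\dots A_N)$ and $\Delta^{\otimes N}(\rho)=\rho$.
   Context: For a finite-dimensional Hilbert space $\mathcal H$, $\mathcal D(\mathcal H)$ denotes the set of density operators on $\mathcal H$. For $S\subseteq\mathcal D(\mathcal H)$, $\mathrm{Aff}(S)=\{\sum_a t_a\sigma_a:\ \text{finitely many }\sigma_a\in S,\ t_a\in\mathbb R,\ \sum_a t_a=1\}\cap\mathcal D(\mathcal H)$; $S$ is affine if $\mathrm{Aff}(S)=S$. For sets of states, $S_1\otimes\dots\otimes S_N=\{\rho_1\otimes\dots\otimes\rho_N:\rho_a\in S_a\}$. A channel is a linear completely positive trace-preserving map. A resource-destroying (RD) map for $\mathcal F(A)$ is a channel $\Delta$ on operators on $\mathcal H_A$ such that $\Delta(\rho)\in\mathcal F(A)$ for all $\rho\in\mathcal D(\mathcal H_A)$ and $\Delta(\sigma)=\sigma$ for all $\sigma\in\mathcal F(A)$. *)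

theory Defs
  imports "HOL-Analysis.Analysis"
begin

text \<open>Operators on a finite-dimensional Hilbert space with orthonormal basis indexed by a
finite set I are represented as complex-valued kernels on I x I, required to vanish outside I x I.\<close>

type_synonym 'i op = "'i \<Rightarrow> 'i \<Rightarrow> complex"

definition supp_op :: "'i set \<Rightarrow> 'i op \<Rightarrow> bool" where
  "supp_op I X \<longleftrightarrow> (\<forall>i j. (i \<notin> I \<or> j \<notin> I) \<longrightarrow> X i j = 0)"

definition psd :: "'i set \<Rightarrow> 'i op \<Rightarrow> bool" where
  "psd I X \<longleftrightarrow> supp_op I X \<and>
     (\<forall>v :: 'i \<Rightarrow> complex. Im (\<Sum>i\<in>I. \<Sum>j\<in>I. cnj (v i) * X i j * v j) = 0
                           \<and> Re (\<Sum>i\<in>I. \<Sum>j\<in>I. cnj (v i) * X i j * v j) \<ge> 0)"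

definition trace_op :: "'i set \<Rightarrow> 'i op \<Rightarrow> complex" where
  "trace_op I X = (\<Sum>i\<in>I. X i i)"

definition density_ops :: "'i set \<Rightarrow> 'i op set" where
  "density_ops I = {\<rho>. psd I \<rho> \<and> trace_op I \<rho> = 1}"

definition linear_on :: "'i set \<Rightarrow> ('i op \<Rightarrow> 'i op) \<Rightarrow> bool" where
  "linear_on I \<Phi> \<longleftrightarrow>
     (\<forall>X. supp_op I X \<longrightarrow> supp_op I (\<Phi> X)) \<and>
     (\<forall>X Y. supp_op I X \<and> supp_op I Y \<longrightarrow>
        \<Phi> (\<lambda>i j. X i j + Y i j) = (\<lambda>i j. \<Phi> X i j + \<Phi> Y i j)) \<and>
     (\<forall>c X. supp_op I X \<longrightarrow> \<Phi> (\<lambda>i j. c * X i j) = (\<lambda>i j. c * \<Phi> X i j))"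

text \<open>The map id_k \<otimes> \<Phi> acting on operators on C^k \<otimes> H (index set {..<k} \<times> I), blockwise.\<close>
definition ampl :: "nat \<Rightarrow> 'i set \<Rightarrow> ('i op \<Rightarrow> 'i op) \<Rightarrow> (nat \<times> 'i) op \<Rightarrow> (nat \<times> 'i) op" where
  "ampl k I \<Phi> X = (\<lambda>(a, i) (b, j). if a < k \<and> b < k then
       \<Phi> (\<lambda>i' j'. if i' \<in> I \<and> j' \<in> I then X (a, i') (b, j') else 0) i j else 0)"

definition completely_positive :: "'i set \<Rightarrow> ('i op \<Rightarrow> 'i op) \<Rightarrow> bool" where
  "completely_positive I \<Phi> \<longleftrightarrow>
     (\<forall>k X. psd ({..<k} \<times> I) X \<longrightarrow> psd ({..<k} \<times> I) (ampl k I \<Phi> X))"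

definition trace_preserving :: "'i set \<Rightarrow> ('i op \<Rightarrow> 'i op) \<Rightarrow> bool" where
  "trace_preserving I \<Phi> \<longleftrightarrow> (\<forall>X. supp_op I X \<longrightarrow> trace_op I (\<Phi> X) = trace_op I X)"

definition channel :: "'i set \<Rightarrow> ('i op \<Rightarrow> 'i op) \<Rightarrow> bool" where
  "channel I \<Phi> \<longleftrightarrow> linear_on I \<Phi> \<and> completely_positive I \<Phi> \<and> trace_preserving I \<Phi>"

definition rd_map :: "'i set \<Rightarrow> 'i op set \<Rightarrow> ('i op \<Rightarrow> 'i op) \<Rightarrow> bool" where
  "rd_map I F \<Delta> \<longleftrightarrow> channel I \<Delta> \<and> (\<forall>\<rho>\<in>density_ops I. \<Delta> \<rho> \<in> F) \<and> (\<forall>\<sigma>\<in>F. \<Delta> \<sigma> = \<sigma>)"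

definition aff_states :: "'i set \<Rightarrow> 'i op set \<Rightarrow> 'i op set" where
  "aff_states I S = {\<rho> \<in> density_ops I. \<exists>(n::nat) \<sigma> t.
      (\<forall>a<n. \<sigma> a \<in> S) \<and> (\<Sum>a<n. t a) = (1::real) \<and>
      \<rho> = (\<lambda>i j. \<Sum>a<n. complex_of_real (t a) * \<sigma> a i j)}"

text \<open>Basis of H^{\<otimes>N}: index lists of length N with entries in I.\<close>
definition tidx :: "'i set \<Rightarrow> nat \<Rightarrow> 'i list set" where
  "tidx I N = {xs. length xs = N \<and> set xs \<subseteq> I}"

definition unit_op :: "'i \<Rightarrow> 'i \<Rightarrow> 'i op" where
  "unit_op k l = (\<lambda>i j. if i = k \<and> j = l then 1 else 0)"

definition tensor_list :: "'i set \<Rightarrow> nat \<Rightarrow> 'i op list \<Rightarrow> 'i list op" where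
  "tensor_list I N \<rho>s = (\<lambda>is js. if is \<in> tidx I N \<and> js \<in> tidx I N
      then (\<Prod>a<N. (\<rho>s ! a) (is ! a) (js ! a)) else 0)"

definition prod_states :: "'i set \<Rightarrow> nat \<Rightarrow> 'i op set \<Rightarrow> 'i list op set" where
  "prod_states I N F = {tensor_list I N \<rho>s | \<rho>s. length \<rho>s = N \<and> set \<rho>s \<subseteq> F}"

text \<open>\<Phi>^{\<otimes>N}: the linear map on operators on H^{\<otimes>N} acting as \<Phi> on each factor,
  written via the matrix coefficients of \<Phi> w.r.t. the matrix units.\<close>
definition tensor_power_map :: "'i set \<Rightarrow> nat \<Rightarrow> ('i op \<Rightarrow> 'i op) \<Rightarrow> 'i list op \<Rightarrow> 'i list op" where
  "tensor_power_map I N \<Phi> X = (\<lambda>is js. if is \<in> tidx I N \<and> js \<in> tidx I N then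
      (\<Sum>ks\<in>tidx I N. \<Sum>ls\<in>tidx I N.
         (\<Prod>a<N. \<Phi> (unit_op (ks ! a) (ls ! a)) (is ! a) (js ! a)) * X ks ls)
      else 0)"

end

theory Submission
  imports Defs
begin



lemma tidx_finite: "finite I \<Longrightarrow> finite (tidx I N)"
  unfolding tidx_def using finite_lists_length_eq[of I N] by (simp add: conj_commute)

lemma sum2: assumes "finite I" "i\<in>I" "j\<in>I" "i\<noteq>j" "\<forall>x\<in>I. x\<noteq>i \<and> x\<noteq>j \<longrightarrow> f x = 0"
  shows "sum f I = f i + f j"
proof -
  have "sum f I = sum f {i,j}" using assms by (intro sum.mono_neutral_right) auto
  thus ?thesis using assms by simp
qed

lemma sum1: assumes "finite I" "i\<in>I" "\<forall>x\<in>I. x\<noteq>i \<longrightarrow> f x = 0"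
  shows "sum f I = f i"
proof -
  have "sum f I = sum f {i}" using assms by (intro sum.mono_neutral_right) auto
  thus ?thesis using assms by simp
qed

lemma quad2: fixes a b :: complex assumes "finite I" "i\<in>I" "j\<in>I" "i\<noteq>j"
  defines "v \<equiv> (\<lambda>x. if x = i then a else if x = j then b else (0::complex))"
  shows "(\<Sum>x\<in>I. \<Sum>y\<in>I. cnj (v x) * X x y * v y) =
     cnj a * X i i * a + cnj a * X i j * b + cnj b * X j i * a + cnj b * X j j * b"
proof -
  have inner: "(\<Sum>y\<in>I. cnj (v x) * X x y * v y) = cnj (v x) * X x i * a + cnj (v x) * X x j * b" for x
    using assms by (subst sum2[of I i j]) (auto simp: v_def)
  show ?thesis unfolding inner using assms by (subst sum2[of I i j]) (auto simp: v_def)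
qed

lemma quad1: assumes "finite I" "i\<in>I"
  defines "v \<equiv> (\<lambda>x. if x = i then 1 else (0::complex))"
  shows "(\<Sum>x\<in>I. \<Sum>y\<in>I. cnj (v x) * X x y * v y) = X i i"
proof -
  have inner: "(\<Sum>y\<in>I. cnj (v x) * X x y * v y) = cnj (v x) * X x i" for x
    using assms by (subst sum1[of I i]) (auto simp: v_def)
  show ?thesis unfolding inner using assms by (subst sum1[of I i]) (auto simp: v_def)
qed

lemma herm: assumes "psd I X" "finite I" shows "X i j = cnj (X j i)"
proof (cases "i \<in> I \<and> j \<in> I")
  case False
  then show ?thesis using assms unfolding psd_def supp_op_def by auto
next
  case True
  have Q: "Im (\<Sum>x\<in>I. \<Sum>y\<in>I. cnj (v x) * X x y * v y) = 0" for v
    using assms unfolding psd_def by blast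
  have ii: "Im (X i i) = 0" using Q[of "\<lambda>x. if x = i then 1 else 0"] quad1[of I i X] True assms by simp
  have jj: "Im (X j j) = 0" using Q[of "\<lambda>x. if x = j then 1 else 0"] quad1[of I j X] True assms by simp
  show ?thesis
  proof (cases "i = j")
    case True then show ?thesis using ii by (simp add: complex_eq_iff)
  next
    case False
    have 1: "Im (X i i + X i j + X j i + X j j) = 0"
      using Q[of "\<lambda>x. if x = i then 1 else if x = j then 1 else 0"] quad2[of I i j 1 1 X] True False assms by simp
    have 2: "Im (X i i + X i j * \<i> - \<i> * X j i + X j j) = 0"
      using Q[of "\<lambda>x. if x = i then 1 else if x = j then \<i> else 0"] quad2[of I i j 1 \<i> X] True False assms by simp
    show ?thesis using 1 2 ii jj by (simp add: complex_eq_iff)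
  qed
qed




lemma supp_sum: "(\<forall>s\<in>S. supp_op I (X s)) \<Longrightarrow> supp_op I (\<lambda>i j. \<Sum>s\<in>S. c s * X s i j)"
  unfolding supp_op_def by auto

lemma lin_zero: "linear_on I \<Phi> \<Longrightarrow> \<Phi> (\<lambda>i j. 0) = (\<lambda>i j. 0)"
proof -
  assume L: "linear_on I \<Phi>"
  have "supp_op I (\<lambda>i j. 0)" by (simp add: supp_op_def)
  then have "\<Phi> (\<lambda>i j. 0 * (\<lambda>i j. 0) i j) = (\<lambda>i j. 0 * \<Phi> (\<lambda>i j. 0) i j)"
    using L unfolding linear_on_def by blast
  then show ?thesis by simp
qed

lemma lin_sum: assumes L: "linear_on I \<Phi>" and "finite S"
  shows "(\<forall>s\<in>S. supp_op I (X s)) \<Longrightarrow>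
     \<Phi> (\<lambda>i j. \<Sum>s\<in>S. c s * X s i j) = (\<lambda>i j. \<Sum>s\<in>S. c s * \<Phi> (X s) i j)"
  using \<open>finite S\<close>
proof (induction S rule: finite_induct)
  case empty then show ?case using lin_zero[OF L] by simp
next
  case (insert s S)
  have sx: "supp_op I (X s)" using insert by auto
  have s1: "supp_op I (\<lambda>i j. c s * X s i j)" using sx by (simp add: supp_op_def)
  have s2: "supp_op I (\<lambda>i j. \<Sum>s\<in>S. c s * X s i j)" using insert supp_sum by auto
  have "\<Phi> (\<lambda>i j. \<Sum>s\<in>insert s S. c s * X s i j) =
        \<Phi> (\<lambda>i j. (\<lambda>i j. c s * X s i j) i j + (\<lambda>i j. \<Sum>s\<in>S. c s * X s i j) i j)"
    using insert by simp
  also have "\<dots> = (\<lambda>i j. \<Phi> (\<lambda>i j. c s * X s i j) i j + \<Phi> (\<lambda>i j. \<Sum>s\<in>S. c s * X s i j) i j)"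
    using L s1 s2 unfolding linear_on_def by blast
  also have "\<Phi> (\<lambda>i j. c s * X s i j) = (\<lambda>i j. c s * \<Phi> (X s) i j)"
    using L sx unfolding linear_on_def by blast
  finally show ?case using insert by simp
qed

lemma sum_prod_tidx: fixes g :: "nat \<Rightarrow> 'i \<Rightarrow> 'a::comm_semiring_1" assumes "finite I"
  shows "(\<Sum>xs\<in>tidx I N. \<Prod>a<N. g a (xs!a)) = (\<Prod>a<N. \<Sum>x\<in>I. g a x)"
proof (induction N arbitrary: g)
  case 0
  have "tidx I 0 = {[]}" by (auto simp: tidx_def)
  then show ?case by simp
next
  case (Suc N)
  have T: "tidx I (Suc N) = (\<lambda>(x,xs). x#xs) ` (I \<times> tidx I N)"
    by (auto simp: tidx_def image_iff length_Suc_conv)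
  have inj: "inj_on (\<lambda>(x,xs). x#xs) (I \<times> tidx I N)" by (auto simp: inj_on_def)
  have "(\<Sum>xs\<in>tidx I (Suc N). \<Prod>a<Suc N. g a (xs!a))
      = (\<Sum>p\<in>I \<times> tidx I N. \<Prod>a<Suc N. g a ((fst p # snd p)!a))"
    unfolding T by (subst sum.reindex[OF inj]) (auto intro!: sum.cong)
  also have "\<dots> = (\<Sum>p\<in>I \<times> tidx I N. g 0 (fst p) * (\<Prod>a<N. g (Suc a) (snd p ! a)))"
    by (subst prod.lessThan_Suc_shift) simp
  also have "\<dots> = (\<Sum>x\<in>I. \<Sum>xs\<in>tidx I N. g 0 x * (\<Prod>a<N. g (Suc a) (xs ! a)))"
    by (simp add: sum.cartesian_product case_prod_beta)
  also have "\<dots> = (\<Sum>x\<in>I. g 0 x) * (\<Sum>xs\<in>tidx I N. \<Prod>a<N. g (Suc a) (xs ! a))"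
    by (simp add: sum_distrib_left[symmetric] sum_distrib_right)
  also have "\<dots> = (\<Sum>x\<in>I. g 0 x) * (\<Prod>a<N. \<Sum>x\<in>I. g (Suc a) x)"
    using Suc.IH[of "\<lambda>a. g (Suc a)"] by simp
  also have "\<dots> = (\<Prod>a<Suc N. \<Sum>x\<in>I. g a x)" by (subst prod.lessThan_Suc_shift) simp
  finally show ?case .
qed

definition Dop :: "(nat \<Rightarrow> complex) \<Rightarrow> nat op" where
  "Dop w = (\<lambda>i j. w i * cnj (w j) / 2)"

lemma cnj_sum_mult: "cnj (\<Sum>x\<in>I. f x) = (\<Sum>x\<in>I. cnj (f x))" by simp

lemma rank1_psd: assumes "finite I" "\<forall>x. x \<notin> I \<longrightarrow> w x = 0"
  shows "psd I (Dop w)"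
proof -
  have E: "(\<Sum>i\<in>I. \<Sum>j\<in>I. cnj (v i) * Dop w i j * v j) = (\<Sum>i\<in>I. cnj (v i) * w i) * cnj (\<Sum>i\<in>I. cnj (v i) * w i) / 2" for v
    by (simp add: Dop_def sum_distrib_left sum_distrib_right sum_divide_distrib mult_ac)
  have Z: "Im (z * cnj z / 2) = 0 \<and> Re (z * cnj z / 2) \<ge> 0" for z :: complex
    by (simp add: complex_mult_cnj)
  have S: "supp_op I (Dop w)" using assms unfolding supp_op_def Dop_def by auto
  show ?thesis unfolding psd_def using S E Z by metis
qed




definition bl :: "nat \<Rightarrow> complex" where "bl s = [1,-1,\<i>,-\<i>]!s"
definition cl :: "nat \<Rightarrow> complex" where "cl s = [1/2,-1/2,\<i>/2,-\<i>/2]!s"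
definition wv :: "nat \<Rightarrow> nat \<Rightarrow> nat \<Rightarrow> nat \<Rightarrow> complex" where
  "wv k l s = (\<lambda>x. if x = k then 1 else if x = l then bl s else 0)"

lemma sum4: "(\<Sum>s<(4::nat). f s) = f 0 + f 1 + f 2 + (f 3 :: complex)"
  by (simp add: eval_nat_numeral)

lemma decomp: "k \<noteq> l \<Longrightarrow> unit_op k l = (\<lambda>i j. \<Sum>s<4. cl s * Dop (wv k l s) i j)"
  by (rule ext, rule ext, simp only: sum4)
     (auto simp: unit_op_def Dop_def wv_def bl_def cl_def field_simps)

lemma wv_dens: fixes k l d s :: nat assumes "k < d" "l < d" "k \<noteq> l" "s < 4"
  shows "Dop (wv k l s) \<in> density_ops {..<d}"
proof -
  have p: "psd {..<d} (Dop (wv k l s))" using assms by (intro rank1_psd) (auto simp: wv_def)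
  have b: "bl s * cnj (bl s) = 1" using assms(4)
    by (auto simp: bl_def less_Suc_eq numeral_eq_Suc)
  have "trace_op {..<d} (Dop (wv k l s)) = Dop (wv k l s) k k + Dop (wv k l s) l l"
    unfolding trace_op_def using assms by (intro sum2) (auto simp: Dop_def wv_def)
  also have "\<dots> = 1" using assms b by (simp add: Dop_def wv_def)
  finally show ?thesis using p by (simp add: density_ops_def)
qed

lemma diag_dens: fixes k d :: nat assumes "k < d" shows "unit_op k k \<in> density_ops {..<d}"
proof -
  let ?w = "\<lambda>x::nat. if x = k then complex_of_real (sqrt 2) else 0"
  have e: "unit_op k k = Dop ?w"
    by (auto simp: unit_op_def Dop_def fun_eq_iff simp flip: of_real_mult)
  have p: "psd {..<d} (Dop ?w)" using assms by (intro rank1_psd) auto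
  have "trace_op {..<d} (unit_op k k) = unit_op k k k k"
    unfolding trace_op_def using assms by (intro sum1) (auto simp: unit_op_def)
  then show ?thesis using p e by (simp add: density_ops_def unit_op_def)
qed

definition Cf :: "nat \<Rightarrow> nat \<Rightarrow> nat \<Rightarrow> complex" where
  "Cf k l s = (if k = l then (if s = 0 then 1 else 0) else cl s)"
definition Sf :: "(nat op \<Rightarrow> nat op) \<Rightarrow> nat \<Rightarrow> nat \<Rightarrow> nat \<Rightarrow> nat op" where
  "Sf \<Delta> k l s = (if k = l then \<Delta> (unit_op k k) else \<Delta> (Dop (wv k l s)))"

lemma decompA: fixes k l d :: nat assumes "rd_map {..<d} F \<Delta>" "k < d" "l < d"
  shows "(\<forall>s<4. Sf \<Delta> k l s \<in> F) \<and> \<Delta> (unit_op k l) = (\<lambda>i j. \<Sum>s<4. Cf k l s * Sf \<Delta> k l s i j)"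
proof (cases "k = l")
  case True
  have "\<Delta> (unit_op k k) \<in> F" using assms diag_dens unfolding rd_map_def by blast
  then show ?thesis using True by (simp add: Sf_def Cf_def sum4)
next
  case False
  have L: "linear_on {..<d} \<Delta>" using assms unfolding rd_map_def channel_def by blast
  have sp: "\<forall>s\<in>{..<4}. supp_op {..<d} (Dop (wv k l s))"
    using wv_dens[OF assms(2,3) False] unfolding density_ops_def psd_def by auto
  have "\<Delta> (unit_op k l) = (\<lambda>i j. \<Sum>s<4. cl s * \<Delta> (Dop (wv k l s)) i j)"
    unfolding decomp[OF False] by (rule lin_sum[OF L _ sp]) simp
  moreover have "\<forall>s<4. Sf \<Delta> k l s \<in> F"
    using False wv_dens[OF assms(2,3) False] assms(1) unfolding rd_map_def Sf_def by auto
  ultimately show ?thesis using False by (simp add: Sf_def Cf_def)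
qed




lemma tidx_nth: "xs \<in> tidx I N \<Longrightarrow> a < N \<Longrightarrow> xs ! a \<in> I"
  unfolding tidx_def using nth_mem by blast

lemma tl_herm: assumes "\<forall>a<N. \<forall>i j. (\<rho>s!a) i j = cnj ((\<rho>s!a) j i)"
  shows "tensor_list I N \<rho>s is js = cnj (tensor_list I N \<rho>s js is)"
proof -
  have "(\<Prod>a<N. (\<rho>s!a) (is!a) (js!a)) = (\<Prod>a<N. cnj ((\<rho>s!a) (js!a) (is!a)))"
    using assms by (intro prod.cong refl) blast
  then show ?thesis unfolding tensor_list_def by simp
qed

lemma tl_trace: assumes "finite I" "\<forall>a<N. trace_op I (\<rho>s!a) = 1"
  shows "trace_op (tidx I N) (tensor_list I N \<rho>s) = 1"
proof -
  have "trace_op (tidx I N) (tensor_list I N \<rho>s) = (\<Sum>xs\<in>tidx I N. \<Prod>a<N. (\<rho>s!a) (xs!a) (xs!a))"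
    unfolding trace_op_def tensor_list_def by (intro sum.cong) auto
  also have "\<dots> = (\<Prod>a<N. \<Sum>x\<in>I. (\<rho>s!a) x x)"
    by (rule sum_prod_tidx[OF assms(1), where g = "\<lambda>a x. (\<rho>s!a) x x"])
  also have "\<dots> = 1" using assms(2) unfolding trace_op_def by simp
  finally show ?thesis .
qed




theorem theorem2:
  fixes d N :: nat
    and F :: "nat op set"
    and \<Delta> :: "nat op \<Rightarrow> nat op"
  assumes "N \<ge> 1"
    and "F \<subseteq> density_ops {..<d}"
    and "aff_states {..<d} F = F"
    and "rd_map {..<d} F \<Delta>"
  shows "\<not> (\<exists>\<rho> \<in> density_ops (tidx {..<d} N).
            \<rho> \<notin> aff_states (tidx {..<d} N) (prod_states {..<d} N F) \<and>
            tensor_power_map {..<d} N \<Delta> \<rho> = \<rho>)"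
proof
  assume "\<exists>\<rho> \<in> density_ops (tidx {..<d} N).
            \<rho> \<notin> aff_states (tidx {..<d} N) (prod_states {..<d} N F) \<and>
            tensor_power_map {..<d} N \<Delta> \<rho> = \<rho>"
  then obtain \<rho> where rd: "\<rho> \<in> density_ops (tidx {..<d} N)"
    and nA: "\<rho> \<notin> aff_states (tidx {..<d} N) (prod_states {..<d} N F)"
    and fix\<rho>: "tensor_power_map {..<d} N \<Delta> \<rho> = \<rho>" by blast
  define I where "I = {..<d::nat}"
  define J where "J = tidx I N"
  define T4 where "T4 = tidx {..<4::nat} N"
  define B where "B = J \<times> J \<times> T4"
  define \<tau> where "\<tau> b = (case b of (ks, ls, ss) \<Rightarrow>
      tensor_list I N (map (\<lambda>a. Sf \<Delta> (ks!a) (ls!a) (ss!a)) [0..<N]))" for b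
  define c where "c b = (case b of (ks, ls, ss) \<Rightarrow>
      \<rho> ks ls * (\<Prod>a<N. Cf (ks!a) (ls!a) (ss!a)))" for b
  have fI: "finite I" unfolding I_def by simp
  have fJ: "finite J" unfolding J_def using tidx_finite[OF fI] .
  have fT4: "finite T4" unfolding T4_def by (rule tidx_finite) simp
  have fB: "finite B" unfolding B_def using fJ fT4 by simp
  have psd\<rho>: "psd J \<rho>" and tr\<rho>: "trace_op J \<rho> = 1"
    using rd unfolding density_ops_def J_def I_def by auto
  have supp\<rho>: "\<rho> is js = 0" if "is \<notin> J \<or> js \<notin> J" for "is" js
    using psd\<rho> that unfolding psd_def supp_op_def by blast
  have SfF: "Sf \<Delta> (ks!a) (ls!a) (ss!a) \<in> F" if "(ks,ls,ss) \<in> B" "a < N" for ks ls ss a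
  proof -
    have "ks!a < d" "ls!a < d" "ss!a < 4" using that tidx_nth unfolding B_def J_def T4_def I_def
      by fastforce+
    then show ?thesis using decompA[OF assms(4)] by blast
  qed
  have \<tau>P: "\<tau> b \<in> prod_states {..<d} N F" if "b \<in> B" for b
  proof -
    obtain ks ls ss where b: "b = (ks,ls,ss)" by (cases b) auto
    show ?thesis unfolding prod_states_def \<tau>_def b I_def[symmetric]
      using SfF that b by (auto intro!: exI[of _ "map (\<lambda>a. Sf \<Delta> (ks!a) (ls!a) (ss!a)) [0..<N]"])
  qed
  have \<tau>0: "\<tau> b is js = 0" if "is \<notin> J \<or> js \<notin> J" for b "is" js
    using that unfolding \<tau>_def tensor_list_def J_def by (auto split: prod.splits)
  have C1: "\<rho> is js = (\<Sum>b\<in>B. c b * \<tau> b is js)" for "is" js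
  proof (cases "is \<in> J \<and> js \<in> J")
    case False
    then show ?thesis using supp\<rho> \<tau>0 by auto
  next
    case True
    have key: "(\<Prod>a<N. \<Delta> (unit_op (ks ! a) (ls ! a)) (is ! a) (js ! a)) * \<rho> ks ls
        = (\<Sum>ss\<in>T4. c (ks,ls,ss) * \<tau> (ks,ls,ss) is js)" if "ks \<in> J" "ls \<in> J" for ks ls
    proof -
      have "(\<Prod>a<N. \<Delta> (unit_op (ks ! a) (ls ! a)) (is ! a) (js ! a))
          = (\<Prod>a<N. \<Sum>s\<in>{..<4}. Cf (ks!a) (ls!a) s * Sf \<Delta> (ks!a) (ls!a) s (is ! a) (js ! a))"
      proof (rule prod.cong[OF refl])
        fix a assume "a \<in> {..<N}"
        then have "ks!a < d" "ls!a < d" using that tidx_nth unfolding J_def I_def by fastforce+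
        then show "\<Delta> (unit_op (ks ! a) (ls ! a)) (is ! a) (js ! a) =
           (\<Sum>s\<in>{..<4}. Cf (ks!a) (ls!a) s * Sf \<Delta> (ks!a) (ls!a) s (is ! a) (js ! a))"
          using decompA[OF assms(4)] by simp
      qed
      also have "\<dots> = (\<Sum>ss\<in>T4. \<Prod>a<N. Cf (ks!a) (ls!a) (ss!a) * Sf \<Delta> (ks!a) (ls!a) (ss!a) (is ! a) (js ! a))"
        unfolding T4_def by (rule sum_prod_tidx[symmetric]) simp
      also have "\<dots> = (\<Sum>ss\<in>T4. (\<Prod>a<N. Cf (ks!a) (ls!a) (ss!a)) * \<tau> (ks,ls,ss) is js)"
      proof (rule sum.cong[OF refl])
        fix ss
        have "\<tau> (ks,ls,ss) is js = (\<Prod>a<N. Sf \<Delta> (ks!a) (ls!a) (ss!a) (is ! a) (js ! a))"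
          using True unfolding \<tau>_def tensor_list_def J_def by (auto intro!: prod.cong)
        then show "(\<Prod>a<N. Cf (ks!a) (ls!a) (ss!a) * Sf \<Delta> (ks!a) (ls!a) (ss!a) (is ! a) (js ! a))
          = (\<Prod>a<N. Cf (ks!a) (ls!a) (ss!a)) * \<tau> (ks,ls,ss) is js"
          by (simp add: prod.distrib)
      qed
      finally show ?thesis unfolding c_def by (simp add: sum_distrib_left sum_distrib_right mult_ac)
    qed
    have "\<rho> is js = tensor_power_map {..<d} N \<Delta> \<rho> is js" using fix\<rho> by simp
    also have "\<dots> = (\<Sum>ks\<in>J. \<Sum>ls\<in>J. (\<Prod>a<N. \<Delta> (unit_op (ks ! a) (ls ! a)) (is ! a) (js ! a)) * \<rho> ks ls)"
      using True unfolding tensor_power_map_def J_def I_def by simp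
    also have "\<dots> = (\<Sum>ks\<in>J. \<Sum>ls\<in>J. \<Sum>ss\<in>T4. c (ks,ls,ss) * \<tau> (ks,ls,ss) is js)"
      using key by (intro sum.cong refl) auto
    also have "\<dots> = (\<Sum>b\<in>B. c b * \<tau> b is js)"
      unfolding B_def by (simp add: sum.cartesian_product case_prod_beta)
    finally show ?thesis .
  qed
  have \<tau>H: "\<tau> b is js = cnj (\<tau> b js is)" if "b \<in> B" for b "is" js
  proof -
    obtain ks ls ss where b: "b = (ks,ls,ss)" by (cases b) auto
    have "\<forall>a<N. \<forall>i j. (map (\<lambda>a. Sf \<Delta> (ks!a) (ls!a) (ss!a)) [0..<N] ! a) i j
       = cnj ((map (\<lambda>a. Sf \<Delta> (ks!a) (ls!a) (ss!a)) [0..<N] ! a) j i)"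
    proof (intro allI impI)
      fix a i j assume a: "a < N"
      have "Sf \<Delta> (ks!a) (ls!a) (ss!a) \<in> density_ops {..<d}" using SfF[of ks ls ss a] that b a assms(2) by auto
      then have P: "psd {..<d} (Sf \<Delta> (ks!a) (ls!a) (ss!a))" unfolding density_ops_def by simp
      show "(map (\<lambda>a. Sf \<Delta> (ks!a) (ls!a) (ss!a)) [0..<N] ! a) i j
       = cnj ((map (\<lambda>a. Sf \<Delta> (ks!a) (ls!a) (ss!a)) [0..<N] ! a) j i)"
        using a herm[OF P, of i j] by simp
    qed
    then show ?thesis unfolding b \<tau>_def by (simp only: prod.case) (rule tl_herm)
  qed
  have \<tau>T: "trace_op J (\<tau> b) = 1" if "b \<in> B" for b
  proof -
    obtain ks ls ss where b: "b = (ks,ls,ss)" by (cases b) auto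
    have "\<forall>a<N. trace_op I (map (\<lambda>a. Sf \<Delta> (ks!a) (ls!a) (ss!a)) [0..<N] ! a) = 1"
    proof (intro allI impI)
      fix a assume a: "a < N"
      have "Sf \<Delta> (ks!a) (ls!a) (ss!a) \<in> density_ops {..<d}" using SfF[of ks ls ss a] that b a assms(2) by auto
      then show "trace_op I (map (\<lambda>a. Sf \<Delta> (ks!a) (ls!a) (ss!a)) [0..<N] ! a) = 1"
        unfolding density_ops_def I_def using a by simp
    qed
    then show ?thesis unfolding b \<tau>_def J_def by (simp add: tl_trace[OF fI])
  qed
  have \<rho>H: "\<rho> is js = cnj (\<rho> js is)" for "is" js using herm[OF psd\<rho> fJ] .
  have C2: "\<rho> is js = (\<Sum>b\<in>B. complex_of_real (Re (c b)) * \<tau> b is js)" for "is" js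
  proof -
    have "\<rho> is js = cnj (\<rho> js is)" by (rule \<rho>H)
    also have "\<dots> = cnj (\<Sum>b\<in>B. c b * \<tau> b js is)" by (simp only: C1)
    also have "\<dots> = (\<Sum>b\<in>B. cnj (c b) * \<tau> b is js)"
      unfolding cnj_sum
    proof (rule sum.cong[OF refl])
      fix b assume "b \<in> B"
      from \<tau>H[OF this, of "is" js] show "cnj (c b * \<tau> b js is) = cnj (c b) * \<tau> b is js"
        by simp
    qed
    finally have h: "\<rho> is js = (\<Sum>b\<in>B. cnj (c b) * \<tau> b is js)" .
    have "2 * \<rho> is js = (\<Sum>b\<in>B. (c b + cnj (c b)) * \<tau> b is js)"
      using C1[of "is" js] h by (simp add: sum.distrib distrib_right)
    also have "\<dots> = 2 * (\<Sum>b\<in>B. complex_of_real (Re (c b)) * \<tau> b is js)"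
      by (simp add: complex_add_cnj sum_distrib_left mult_ac)
    finally show ?thesis by simp
  qed
  have C3: "(\<Sum>b\<in>B. Re (c b)) = 1"
  proof -
    have "1 = trace_op J \<rho>" using tr\<rho> by simp
    also have "\<dots> = (\<Sum>is\<in>J. \<Sum>b\<in>B. complex_of_real (Re (c b)) * \<tau> b is is)"
      unfolding trace_op_def using C2 by simp
    also have "\<dots> = (\<Sum>b\<in>B. complex_of_real (Re (c b)) * trace_op J (\<tau> b))"
      unfolding trace_op_def by (subst sum.swap) (simp add: sum_distrib_left)
    also have "\<dots> = (\<Sum>b\<in>B. complex_of_real (Re (c b)))" using \<tau>T by simp
    finally have "complex_of_real (\<Sum>b\<in>B. Re (c b)) = 1" by simp
    then show ?thesis using of_real_eq_1_iff by blast
  qed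
  obtain h where h: "bij_betw h {0..<card B} B" using ex_bij_betw_nat_finite[OF fB] by blast
  have "\<rho> \<in> aff_states (tidx {..<d} N) (prod_states {..<d} N F)"
    unfolding aff_states_def
  proof (intro CollectI conjI exI)
    show "\<rho> \<in> density_ops (tidx {..<d} N)" using rd .
    show "\<forall>a<card B. \<tau> (h a) \<in> prod_states {..<d} N F"
      using h \<tau>P bij_betwE by fastforce
    show "(\<Sum>a<card B. Re (c (h a))) = 1"
      using C3 sum.reindex_bij_betw[OF h, of "\<lambda>b. Re (c b)"] by (simp add: atLeast0LessThan)
    show "\<rho> = (\<lambda>i j. \<Sum>a<card B. complex_of_real (Re (c (h a))) * \<tau> (h a) i j)"
    proof (intro ext)
      fix i j
      show "\<rho> i j = (\<Sum>a<card B. complex_of_real (Re (c (h a))) * \<tau> (h a) i j)"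
        using C2[of i j] sum.reindex_bij_betw[OF h, of "\<lambda>b. complex_of_real (Re (c b)) * \<tau> b i j"]
        by (simp add: atLeast0LessThan)
    qed
  qed
  then show False using nA by contradiction
qed


end
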